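(* There is an absolute constant $c>0$ such that for all $k\ge3$, with $R=F_{\lceil 2k/3\rceil}$, $$\mathcal{Q}_R(\mathcal{F}_k)\le c\,F_k^{-2/3},$$ where $\mathcal{F}_k=\{(j/F_k,\{jF_{k-1}/F_k\})\mid j=1,\ldots,F_k\}$.
   Context: $F_k$ is the $k$-th Fibonacci number: $F_1=F_2=1$, $F_k=F_{k-1}+F_{k-2}$; $\{x\}=x-\lfloor x\rfloor$. For $\boldsymbol{n}=(n_1,n_2)\in\mathbb{Z}^2$ let $|\boldsymbol{n}|=\max\{|n_1|,|n_2|\}$. For a point set $T_M=\{\boldsymbol{x}_1,\ldots,\boldsymbol{x}_M\}\subset\mathbb{R}^2$ and $R>0$, $$\mathcal{Q}_R(T_M)=\frac1R+\sum_{\substack{\boldsymbol{n}\in\mathbb{Z}^2\\0<|\boldsymbol{n}|<R}}\Big(\frac{1}{|\boldsymbol{n}|^{3/2}}+\frac{1}{(1+|n_1|)(1+|n_2|)}\Big)\Big|\frac1M\sum_{j=1}^M e^{2\pi\mathrm{i}\,\boldsymbol{n}\cdot\boldsymbol{x}_j}\Big|.$$ *)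

theory Defs
  imports "HOL-Analysis.Analysis" "HOL-Number_Theory.Fib"
begin

definition supnorm :: "int \<times> int \<Rightarrow> int" where
  "supnorm n = max \<bar>fst n\<bar> \<bar>snd n\<bar>"

definition expsum :: "nat \<Rightarrow> (nat \<Rightarrow> real \<times> real) \<Rightarrow> int \<times> int \<Rightarrow> complex" where
  "expsum M x n = (1 / of_nat M) *
     (\<Sum>j=1..M. cis (2 * pi * (of_int (fst n) * fst (x j) + of_int (snd n) * snd (x j))))"

definition QR :: "real \<Rightarrow> nat \<Rightarrow> (nat \<Rightarrow> real \<times> real) \<Rightarrow> real" where
  "QR R M x = 1 / R +
     (\<Sum>n\<in>{n :: int \<times> int. 0 < supnorm n \<and> real_of_int (supnorm n) < R}.
        (1 / (real_of_int (supnorm n)) powr (3/2)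
         + 1 / ((1 + real_of_int \<bar>fst n\<bar>) * (1 + real_of_int \<bar>snd n\<bar>)))
        * cmod (expsum M x n))"

definition fibpt :: "nat \<Rightarrow> nat \<Rightarrow> real \<times> real" where
  "fibpt k j = (real j / real (fib k), frac (real j * real (fib (k - 1)) / real (fib k)))"

end

theory Submission
  imports Defs "HOL-Library.Real_Mod"
begin

definition phi :: real where "phi = (1 + sqrt 5)/2"

lemma phi_sq: "phi^2 = phi + 1"
  unfolding phi_def by (simp add: power2_eq_square field_simps)

lemma phi_bounds: "1.6 < phi \<and> phi < 1.62"
proof -
  have "sqrt 5 < 2.24" by (rule real_less_lsqrt) (auto simp: power2_eq_square)
  moreover have "2.2 < sqrt 5" by (rule real_less_rsqrt) (auto simp: power2_eq_square)
  ultimately show ?thesis unfolding phi_def by auto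
qed

lemma fib_phi_upper: "real (fib (Suc n)) \<le> phi^n \<and> real (fib (Suc (Suc n))) \<le> phi^(Suc n)"
proof (induction n)
  case 0 then show ?case using phi_bounds by auto
next
  case (Suc n)
  have "real (fib (Suc (Suc (Suc n)))) = real (fib (Suc (Suc n))) + real (fib (Suc n))" by simp
  also have "\<dots> \<le> phi^(Suc n) + phi^n" using Suc by auto
  also have "\<dots> = phi^n * (phi + 1)" by (simp add: algebra_simps)
  also have "\<dots> = phi^(Suc (Suc n))" by (simp add: phi_sq[symmetric] power2_eq_square)
  finally show ?case using Suc by auto
qed

lemma fib_phi_lower: "phi^n \<le> real (fib (n+2)) \<and> phi^(Suc n) \<le> real (fib (n+3))"
proof (induction n)
  case 0 then show ?case using phi_bounds by (auto simp: numeral_3_eq_3)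
next
  case (Suc n)
  have "phi^(Suc (Suc n)) = phi^n * (phi + 1)" by (simp add: phi_sq[symmetric] power2_eq_square)
  also have "\<dots> = phi^(Suc n) + phi^n" by (simp add: algebra_simps)
  also have "\<dots> \<le> real (fib (n+3)) + real (fib (n+2))" using Suc by auto
  also have "\<dots> = real (fib (Suc n + 3))" by (simp add: numeral_3_eq_3)
  finally show ?case using Suc by (auto simp: numeral_3_eq_3)
qed

lemma cassini': "\<bar>int (fib n)^2 + int (fib n) * int (fib (Suc n)) - int (fib (Suc n))^2\<bar> = 1"
proof (induction n)
  case 0 then show ?case by simp
next
  case (Suc n)
  have e: "int (fib (Suc (Suc n))) = int (fib (Suc n)) + int (fib n)" by simp
  have "int (fib (Suc n))^2 + int (fib (Suc n)) * int (fib (Suc (Suc n))) - int (fib (Suc (Suc n)))^2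
     = - (int (fib n)^2 + int (fib n) * int (fib (Suc n)) - int (fib (Suc n))^2)"
    unfolding e by (simp add: algebra_simps power2_eq_square)
  then show ?case using Suc by simp
qed

lemma five_sq: "(a::nat)^2 = 5 * b^2 \<Longrightarrow> b = 0"
proof (induction b arbitrary: a rule: less_induct)
  case (less b)
  have p5: "prime (5::nat)" by simp
  have "5 dvd a^2" using less.prems by simp
  then have "5 dvd a" using p5 prime_dvd_power by blast
  then obtain c where c: "a = 5 * c" by blast
  then have "b^2 = 5 * c^2" using less.prems by (simp add: power2_eq_square)
  then have "5 dvd b^2" by simp
  then have "5 dvd b" using p5 prime_dvd_power by blast
  then obtain d where d: "b = 5 * d" by blast
  then have "c^2 = 5 * d^2" using \<open>b^2 = 5 * c^2\<close> by (simp add: power2_eq_square)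
  show "b = 0"
  proof (rule ccontr)
    assume "b \<noteq> 0"
    then have "d < b" using d by simp
    then have "d = 0" using less.IH \<open>c^2 = 5 * d^2\<close> by blast
    then show False using d \<open>b \<noteq> 0\<close> by simp
  qed
qed

lemma norm_form_nz: "(p::int)^2 + p*y - y^2 = 0 \<Longrightarrow> p = 0 \<and> y = 0"
proof -
  assume h: "p^2 + p*y - y^2 = 0"
  have "(2*p+y)^2 = 5 * y^2" using h by (simp add: algebra_simps power2_eq_square)
  then have "(nat \<bar>2*p+y\<bar>)^2 = 5 * (nat \<bar>y\<bar>)^2"
  proof -
    have "int ((nat \<bar>2*p+y\<bar>)^2) = (2*p+y)^2" by simp
    also have "\<dots> = 5 * y^2" by fact
    also have "\<dots> = int (5 * (nat \<bar>y\<bar>)^2)" by simp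
    finally show ?thesis by (simp only: of_nat_eq_iff)
  qed
  then have "nat \<bar>y\<bar> = 0" by (rule five_sq)
  then have "y = 0" by simp
  then show ?thesis using h by simp
qed

lemma expsum_bound:
  assumes "k \<ge> 1"
  shows "cmod (expsum (fib k) (fibpt k) n)
    \<le> (if int (fib k) dvd fst n + snd n * int (fib (k-1)) then 1 else 0)"
proof -
  define F where "F = fib k"
  define G where "G = fib (k-1)"
  define a where "a = fst n + snd n * int G"
  define z where "z = cis (2*pi*real_of_int a / real F)"
  have Fpos: "F > 0" unfolding F_def using assms by (simp add: fib_neq_0_nat)
  have hterm: "cis (2 * pi * (of_int (fst n) * fst (fibpt k j) + of_int (snd n) * snd (fibpt k j))) = z^j" for j
  proof -
    have "2 * pi * (of_int (fst n) * fst (fibpt k j) + of_int (snd n) * snd (fibpt k j))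
        = real j * (2*pi*real_of_int a / real F) + 2*pi*real_of_int (-(snd n * \<lfloor>real j * real G / real F\<rfloor>))"
      using Fpos unfolding fibpt_def frac_def a_def F_def[symmetric] G_def[symmetric]
      by (simp add: field_simps)
    then have "cis (2 * pi * (of_int (fst n) * fst (fibpt k j) + of_int (snd n) * snd (fibpt k j)))
       = cis (real j * (2*pi*real_of_int a / real F)) * cis (2*pi*real_of_int (-(snd n * \<lfloor>real j * real G / real F\<rfloor>)))"
      by (simp add: cis_mult)
    also have "\<dots> = cis (real j * (2*pi*real_of_int a / real F))"
      by (subst cis_multiple_2pi) auto
    also have "\<dots> = z^j" unfolding z_def by (simp only: Complex.DeMoivre)
    finally show ?thesis .
  qed
  have es: "expsum F (fibpt k) n = (1 / of_nat F) * (\<Sum>j=1..F. z^j)"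
    unfolding expsum_def using hterm by simp
  show ?thesis
  proof (cases "int F dvd a")
    case True
    then obtain q where q: "a = int F * q" by blast
    have "2*pi*real_of_int a / real F = 2*pi*real_of_int q" unfolding q using Fpos by simp
    then have "z = cis (2*pi*real_of_int q)" unfolding z_def by metis
    moreover have "cis (2*pi*real_of_int q) = 1" by (rule cis_multiple_2pi) simp
    ultimately have "z = 1" by simp
    then have "expsum F (fibpt k) n = 1" using es Fpos by simp
    then show ?thesis using True unfolding F_def G_def a_def by simp
  next
    case False
    have z1: "z \<noteq> 1"
    proof
      assume "z = 1"
      then obtain m where m: "2*pi*real_of_int a / real F = of_int m * (2*pi)"
        unfolding z_def cis_eq_1_iff by blast
      then have "real_of_int a = real_of_int (m * int F)" using Fpos by (simp add: field_simps)
      then have "a = m * int F" by linarith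
      then show False using False by simp
    qed
    have zF: "z^F = 1" unfolding z_def Complex.DeMoivre using Fpos
      by (simp add: cis_multiple_2pi)
    have "(\<Sum>j=1..F. z^j) = (\<Sum>j<F. z^(Suc j))" using sum.atLeast1_atMost_eq[of "\<lambda>j. z^j" F] by simp
    also have "\<dots> = z * (\<Sum>j<F. z^j)" by (simp add: sum_distrib_left)
    also have "\<dots> = 0" using z1 zF by (simp add: sum_gp_strict)
    finally have "expsum F (fibpt k) n = 0" using es by simp
    then show ?thesis unfolding F_def by simp
  qed
qed

lemma prod_bound:
  fixes v1 v2 :: int
  assumes k: "k \<ge> 1" and dv: "int (fib k) dvd v1 + v2 * int (fib (k-1))"
    and nz: "(v1, v2) \<noteq> (0, 0)" and sm: "2 * (v1^2 + v2^2) \<le> int (fib k)^2"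
  shows "int (fib k) \<le> 6 * \<bar>v1 * v2\<bar>"
proof -
  define F where "F = int (fib k)"
  define G where "G = int (fib (k-1))"
  define D where "D = G^2 + G*F - F^2"
  have Fpos: "F > 0" unfolding F_def using k by (simp add: fib_neq_0_nat)
  have GF: "G \<le> F" unfolding F_def G_def by (simp add: fib_mono)
  have G0: "G \<ge> 0" unfolding G_def by simp
  have D1: "\<bar>D\<bar> = 1" using cassini'[of "k-1"] k unfolding D_def F_def G_def by simp
  obtain p where p: "v1 + v2 * G = F * p" using dv unfolding F_def G_def by blast
  define N where "N = p^2 + p * v2 - v2^2"
  have id: "F^2 * N = v1^2 + (2*G+F) * (v1* v2) + D * v2^2"
  proof -
    have "F^2 * N = (F*p)^2 + (F*p)* v2*F - F^2* v2^2" unfolding N_def by (simp add: algebra_simps power2_eq_square)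
    also have "\<dots> = (v1 + v2*G)^2 + (v1+v2*G)* v2*F - F^2* v2^2" using p by simp
    also have "\<dots> = v1^2 + (2*G+F) * (v1* v2) + D * v2^2" unfolding D_def by (simp add: algebra_simps power2_eq_square)
    finally show ?thesis .
  qed
  have N0: "N \<noteq> 0"
  proof
    assume "N = 0"
    then have "p = 0 \<and> v2 = 0" using norm_form_nz unfolding N_def by blast
    then have "v1 = 0" "v2 = 0" using p by auto
    then show False using nz by simp
  qed
  have "1 \<le> \<bar>N\<bar>" using N0 by linarith
  then have "F^2 \<le> F^2 * \<bar>N\<bar>" by (simp add: mult_le_cancel_left1 power2_eq_square)
  also have "\<dots> = \<bar>v1^2 + (2*G+F) * (v1* v2) + D * v2^2\<bar>" unfolding id[symmetric] by (simp add: abs_mult)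
  also have "\<dots> \<le> v1^2 + (2*G+F) * \<bar>v1* v2\<bar> + v2^2"
  proof -
    have "\<bar>D * v2^2\<bar> = v2^2" using D1 by (simp add: abs_mult)
    moreover have "\<bar>(2*G+F) * (v1* v2)\<bar> = (2*G+F) * \<bar>v1* v2\<bar>" using G0 Fpos by (simp add: abs_mult)
    ultimately show ?thesis by (smt (verit) abs_triangle_ineq zero_le_power2 abs_of_nonneg)
  qed
  also have "\<dots> \<le> v1^2 + v2^2 + 3*F * \<bar>v1* v2\<bar>"
    using GF by (simp add: mult_right_mono)
  finally have "F^2 \<le> v1^2 + v2^2 + 3*F * \<bar>v1* v2\<bar>" .
  then have "F * F \<le> F * (6 * \<bar>v1* v2\<bar>)" using sm unfolding F_def[symmetric] by (simp add: power2_eq_square algebra_simps)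
  then show ?thesis using Fpos unfolding F_def by simp
qed

definition inL :: "nat \<Rightarrow> int \<times> int \<Rightarrow> bool" where
  "inL k n \<longleftrightarrow> int (fib k) dvd fst n + snd n * int (fib (k-1))"

definition Tset :: "nat \<Rightarrow> real \<Rightarrow> (int \<times> int) set" where
  "Tset k r = {n. inL k n \<and> 0 < supnorm n \<and> real_of_int (supnorm n) \<le> r}"

lemma supnorm_le: "\<bar>fst n\<bar> \<le> supnorm n" "\<bar>snd n\<bar> \<le> supnorm n"
  unfolding supnorm_def by auto

lemma finite_box: "finite {n :: int \<times> int. real_of_int (supnorm n) \<le> r}"
proof -
  define N where "N = \<lceil>r\<rceil>"
  have "{n :: int \<times> int. real_of_int (supnorm n) \<le> r} \<subseteq> {-N..N} \<times> {-N..N}"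
  proof
    fix n :: "int \<times> int" assume "n \<in> {n. real_of_int (supnorm n) \<le> r}"
    then have "supnorm n \<le> N" unfolding N_def by (simp add: le_ceiling_iff)
    then show "n \<in> {-N..N} \<times> {-N..N}" using supnorm_le[of n]
      by (cases n) auto
  qed
  then show ?thesis by (rule finite_subset) simp
qed

lemma Tset_finite: "finite (Tset k r)"
  by (rule finite_subset[OF _ finite_box[of r]]) (auto simp: Tset_def)

lemma prod_bound_real:
  assumes k: "k \<ge> 1" and n: "inL k n" "n \<noteq> (0,0)"
    and sm: "2 * (real_of_int (fst n)^2 + real_of_int (snd n)^2) \<le> real (fib k)^2"
  shows "real (fib k) \<le> 6 * \<bar>real_of_int (fst n)\<bar> * \<bar>real_of_int (snd n)\<bar>"
proof -
  have "real_of_int (2 * (fst n^2 + snd n^2)) \<le> real_of_int (int (fib k)^2)" using sm by simp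
  then have "2 * (fst n^2 + snd n^2) \<le> int (fib k)^2" by (simp only: of_int_le_iff)
  moreover have "(fst n, snd n) \<noteq> (0,0)" using n by (cases n) auto
  ultimately have "int (fib k) \<le> 6 * \<bar>fst n * snd n\<bar>"
    using prod_bound[OF k] n(1) unfolding inL_def by blast
  then have "real_of_int (int (fib k)) \<le> real_of_int (6 * \<bar>fst n * snd n\<bar>)" by (simp only: of_int_le_iff)
  then show ?thesis by (simp add: abs_mult)
qed

lemma sq_le: "\<bar>x::real\<bar> \<le> y \<Longrightarrow> x^2 \<le> y^2"
  using power_mono[of "\<bar>x\<bar>" y 2] by simp

lemma Tset_card:
  assumes k: "k \<ge> 1" and r: "r > 0" and rF: "4 * r \<le> real (fib k)"
  shows "real (card (Tset k r)) \<le> 30 * r^2 / real (fib k)"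
proof -
  define F where "F = real (fib k)"
  define T where "T = Tset k r"
  have Fpos: "F > 0" unfolding F_def using k by (simp add: fib_neq_0_nat)
  define d where "d = F / (12 * r)"
  have dpos: "d > 0" unfolding d_def using Fpos r by simp
  define h where "h n = \<lfloor>(real_of_int (snd n) + r) / d\<rfloor>" for n :: "int \<times> int"
  have bnd: "\<bar>real_of_int (fst n)\<bar> \<le> r" "\<bar>real_of_int (snd n)\<bar> \<le> r" if "n \<in> T" for n
    using that supnorm_le[of n] unfolding T_def Tset_def by (auto simp del: of_int_abs simp add: of_int_abs[symmetric] intro: order.trans[of _ "real_of_int (supnorm n)"])
  have inj: "inj_on h T"
  proof
    fix n n' assume nT: "n \<in> T" and n'T: "n' \<in> T" and hh: "h n = h n'"
    show "n = n'"
    proof (rule ccontr)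
      assume ne: "n \<noteq> n'"
      define v where "v = (fst n - fst n', snd n - snd n')"
      have vL: "inL k v" using nT n'T unfolding T_def Tset_def inL_def v_def
        by (auto simp: algebra_simps dest: dvd_diff)
      have v0: "v \<noteq> (0,0)" using ne unfolding v_def by (cases n, cases n') auto
      have b1: "\<bar>real_of_int (fst v)\<bar> \<le> 2*r" using bnd[OF nT] bnd[OF n'T] unfolding v_def by simp
      have b2: "\<bar>real_of_int (snd v)\<bar> \<le> 2*r" using bnd[OF nT] bnd[OF n'T] unfolding v_def by simp
      have "\<bar>(real_of_int (snd n) + r) / d - (real_of_int (snd n') + r) / d\<bar> < 1"
        using hh unfolding h_def by linarith
      then have "\<bar>real_of_int (snd v)\<bar> / d < 1" using dpos unfolding v_def by (simp add: diff_divide_distrib[symmetric])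
      then have b3: "\<bar>real_of_int (snd v)\<bar> < d" using dpos by simp
      have "(real_of_int (fst v))^2 \<le> (2*r)^2" using b1 by (rule sq_le)
      moreover have "(real_of_int (snd v))^2 \<le> (2*r)^2" using b2 by (rule sq_le)
      moreover have "16 * r^2 \<le> F^2" using rF r unfolding F_def
        using power_mono[of "4*r" "real (fib k)" 2] by (simp add: power_mult_distrib)
      ultimately have "2 * (real_of_int (fst v)^2 + real_of_int (snd v)^2) \<le> real (fib k)^2"
        unfolding F_def by (simp add: power_mult_distrib)
      then have "F \<le> 6 * \<bar>real_of_int (fst v)\<bar> * \<bar>real_of_int (snd v)\<bar>"
        using prod_bound_real[OF k vL v0] unfolding F_def by simp
      also have "\<dots> \<le> 6 * (2*r) * \<bar>real_of_int (snd v)\<bar>"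
        using b1 by (simp add: mult_right_mono)
      also have "\<dots> < 6 * (2*r) * d" using b3 r by simp
      also have "\<dots> = F" unfolding d_def using r by simp
      finally show False by simp
    qed
  qed
  define M where "M = \<lfloor>2 * r / d\<rfloor>"
  have img: "h ` T \<subseteq> {0..M}"
  proof
    fix x assume "x \<in> h ` T"
    then obtain n where nT: "n \<in> T" and x: "x = h n" by blast
    have "0 \<le> (real_of_int (snd n) + r) / d" using bnd[OF nT] dpos by simp
    moreover have "(real_of_int (snd n) + r) / d \<le> 2 * r / d" using bnd[OF nT] dpos by (simp add: divide_right_mono)
    ultimately show "x \<in> {0..M}" unfolding x h_def M_def by (auto intro: floor_mono)
  qed
  have "card T = card (h ` T)" using inj by (simp add: card_image)
  also have "\<dots> \<le> card {0..M}" using img by (rule card_mono[rotated]) simp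
  finally have "real (card T) \<le> real (nat (M + 1))" by simp
  also have "\<dots> \<le> 2 * r / d + 1"
  proof -
    have x0: "0 \<le> 2*r/d" using dpos r by simp
    then have "M \<ge> 0" unfolding M_def by simp
    then have "real (nat (M+1)) = real_of_int (M+1)" by simp
    also have "\<dots> \<le> 2 * r / d + 1" unfolding M_def using of_int_floor_le[of "2*r/d"] by simp
    finally show ?thesis .
  qed
  also have "\<dots> = 24 * r^2 / F + 1" unfolding d_def using r Fpos by (simp add: field_simps power2_eq_square)
  finally have c1: "real (card T) \<le> 24 * r^2 / F + 1" .
  show ?thesis
  proof (cases "T = {}")
    case True then show ?thesis unfolding T_def using Fpos by simp
  next
    case False
    then obtain n where nT: "n \<in> T" by blast
    have n0: "n \<noteq> (0,0)" using nT unfolding T_def Tset_def supnorm_def by auto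
    have nL: "inL k n" using nT unfolding T_def Tset_def by simp
    have "(real_of_int (fst n))^2 \<le> r^2" using bnd(1)[OF nT] by (rule sq_le)
    moreover have "(real_of_int (snd n))^2 \<le> r^2" using bnd(2)[OF nT] by (rule sq_le)
    moreover have "16 * r^2 \<le> F^2" using rF r unfolding F_def
      using power_mono[of "4*r" "real (fib k)" 2] by (simp add: power_mult_distrib)
    ultimately have "2 * (real_of_int (fst n)^2 + real_of_int (snd n)^2) \<le> real (fib k)^2"
      using zero_le_power2[of r] unfolding F_def by (smt (verit))
    then have "F \<le> 6 * \<bar>real_of_int (fst n)\<bar> * \<bar>real_of_int (snd n)\<bar>"
      using prod_bound_real[OF k nL n0] unfolding F_def by simp
    also have "\<dots> \<le> 6 * r * r" using bnd[OF nT] by (simp add: mult_mono)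
    finally have "1 \<le> 6 * r^2 / F" using Fpos by (simp add: power2_eq_square)
    then show ?thesis using c1 unfolding T_def F_def by simp
  qed
qed

definition W :: "nat \<Rightarrow> real" where "W i = 1 / (2^i * sqrt (2^i))"

lemma powr32: "(s::real) > 0 \<Longrightarrow> s powr (3/2) = s * sqrt s"
proof -
  assume s: "s > 0"
  have "s powr (3/2) = s powr (1 + 1/2)" by simp
  also have "\<dots> = s powr 1 * s powr (1/2)" by (rule powr_add)
  also have "\<dots> = s * sqrt s" using s by (simp add: powr_half_sqrt)
  finally show ?thesis .
qed

lemma dyadic_point:
  fixes s :: real
  assumes s1: "1 \<le> s" and sm: "s \<le> 2^m"
  shows "1 / s powr (3/2) \<le> (\<Sum>i\<le>m. if s \<le> 2^i then 2 * sqrt 2 * W i else 0)"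
proof -
  define i0 where "i0 = (LEAST i. s \<le> 2^i)"
  have si0: "s \<le> 2^i0" unfolding i0_def by (rule LeastI[of _ m]) (rule sm)
  have i0m: "i0 \<le> m" unfolding i0_def by (rule Least_le) (rule sm)
  have lt: "2^i0 < 2 * s"
  proof (cases i0)
    case 0 then show ?thesis using s1 by simp
  next
    case (Suc j)
    then have "j < i0" by simp
    then have "\<not> s \<le> 2^j" unfolding i0_def by (rule not_less_Least)
    then show ?thesis using Suc by simp
  qed
  define t :: real where "t = 2^i0"
  have tpos: "t > 0" unfolding t_def by simp
  have "sqrt t \<le> sqrt 2 * sqrt s" using lt unfolding t_def by (simp add: real_sqrt_mult[symmetric])
  then have "t * sqrt t \<le> (2 * s) * (sqrt 2 * sqrt s)" using lt tpos unfolding t_def[symmetric]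
    by (intro mult_mono) auto
  then have "1 / (s * sqrt s) \<le> 2 * sqrt 2 * (1 / (t * sqrt t))" using tpos s1
    by (simp add: field_simps)
  then have "1 / s powr (3/2) \<le> 2 * sqrt 2 * W i0" using s1 unfolding W_def t_def by (simp add: powr32)
  also have "\<dots> = (if s \<le> 2^i0 then 2 * sqrt 2 * W i0 else 0)" using si0 by simp
  also have "\<dots> \<le> (\<Sum>i\<le>m. if s \<le> 2^i then 2 * sqrt 2 * W i else 0)"
    by (rule member_le_sum) (use i0m in \<open>auto simp: W_def\<close>)
  finally show ?thesis .
qed

lemma geom_bound:
  assumes "(2::real)^m < 2 * R"
  shows "(\<Sum>i\<le>m. sqrt 2 ^ i) \<le> 5 * sqrt R"
proof -
  have R0: "R > 0" using assms zero_less_power[of "2::real" m] by linarith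
  define a where "a = sqrt (2::real)"
  have a14: "1.4 \<le> a" unfolding a_def by (rule real_le_rsqrt) (simp add: power2_eq_square)
  have "(\<Sum>i\<le>m. a ^ i) = (\<Sum>i<Suc m. a ^ i)" by (simp add: lessThan_Suc_atMost)
  also have "\<dots> = (1 - a^Suc m) / (1 - a)" using a14 sum_gp_strict[of a "Suc m"] by (simp del: power_Suc sum.lessThan_Suc)
  also have "\<dots> = (a^Suc m - 1) / (a - 1)" using a14 by (simp add: field_simps)
  also have "\<dots> \<le> a^Suc m / (a - 1)" using a14 by (simp add: divide_right_mono)
  also have "\<dots> = a * sqrt (2^m) / (a - 1)" unfolding a_def by (simp add: real_sqrt_power)
  also have "\<dots> \<le> a * sqrt (2 * R) / (a - 1)"
    using assms a14 R0 by (intro divide_right_mono mult_left_mono) auto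
  also have "\<dots> = 2 * sqrt R / (a - 1)" unfolding a_def by (simp add: real_sqrt_mult)
  also have "\<dots> \<le> 2 * sqrt R / 0.4" using a14 R0 by (intro divide_left_mono) auto
  finally show ?thesis unfolding a_def by simp
qed

lemma W_sq: "W i * (2^i)^2 = sqrt 2 ^ i"
proof -
  define t :: real where "t = 2^i"
  have t: "t > 0" unfolding t_def by simp
  have st: "sqrt t * sqrt t = t" using t by simp
  have "W i * (2^i)^2 = t * t / (t * sqrt t)" unfolding W_def t_def by (simp add: power2_eq_square)
  also have "\<dots> = sqrt t" using t st by (metis mult.commute nonzero_mult_div_cancel_left real_sqrt_gt_0_iff
      less_irrefl mult_eq_0_iff real_sqrt_eq_zero_cancel_iff order_less_imp_not_eq2 times_divide_eq_right)
  also have "\<dots> = sqrt 2 ^ i" unfolding t_def by (simp add: real_sqrt_power)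
  finally show ?thesis .
qed

lemma QR_bound:
  assumes k: "k \<ge> 1" and R1: "1 \<le> R" and RF: "8 * R \<le> real (fib k)"
  shows "QR R (fib k) (fibpt k) \<le> 1/R + 450 * sqrt R / real (fib k) + 180 * R^2 / real (fib k)^2"
proof -
  define F where "F = real (fib k)"
  have Fpos: "F > 0" unfolding F_def using k by (simp add: fib_neq_0_nat)
  define A where "A = {n :: int \<times> int. 0 < supnorm n \<and> real_of_int (supnorm n) < R}"
  define p where "p n = 1 / (real_of_int (supnorm n)) powr (3/2)" for n :: "int \<times> int"
  define h where "h n = 1 / ((1 + real_of_int \<bar>fst n\<bar>) * (1 + real_of_int \<bar>snd n\<bar>))" for n :: "int \<times> int"
  define S where "S = {n \<in> A. inL k n}"
  have finA: "finite A" by (rule finite_subset[OF _ finite_box[of R]]) (auto simp: A_def)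
  have finS: "finite S" using finA unfolding S_def by simp
  have p0: "p n \<ge> 0" for n unfolding p_def by simp
  have h0: "h n \<ge> 0" for n unfolding h_def by (intro divide_nonneg_pos mult_pos_pos) auto
  have QR_eq: "QR R (fib k) (fibpt k) = 1/R + (\<Sum>n\<in>A. (p n + h n) * cmod (expsum (fib k) (fibpt k) n))"
    unfolding QR_def A_def p_def h_def by simp
  have "(\<Sum>n\<in>A. (p n + h n) * cmod (expsum (fib k) (fibpt k) n)) \<le> (\<Sum>n\<in>A. if inL k n then p n + h n else 0)"
  proof (rule sum_mono)
    fix n assume "n \<in> A"
    have "cmod (expsum (fib k) (fibpt k) n) \<le> (if inL k n then 1 else 0)"
      using expsum_bound[OF k, of n] unfolding inL_def by simp
    then show "(p n + h n) * cmod (expsum (fib k) (fibpt k) n) \<le> (if inL k n then p n + h n else 0)"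
      using p0[of n] h0[of n] by (cases "inL k n") (auto intro: mult_left_le mult_nonneg_nonneg)
  qed
  also have "\<dots> = (\<Sum>n\<in>S. p n + h n)" unfolding S_def by (rule sum.inter_filter[OF finA, symmetric])
  also have "\<dots> = (\<Sum>n\<in>S. p n) + (\<Sum>n\<in>S. h n)" by (rule sum.distrib)
  finally have step1: "QR R (fib k) (fibpt k) \<le> 1/R + (\<Sum>n\<in>S. p n) + (\<Sum>n\<in>S. h n)"
    unfolding QR_eq by simp
  have ST: "S \<subseteq> Tset k R" unfolding S_def A_def Tset_def by auto
  have snR: "\<bar>real_of_int (fst n)\<bar> \<le> R" "\<bar>real_of_int (snd n)\<bar> \<le> R" "1 \<le> real_of_int (supnorm n)"
    "real_of_int (supnorm n) < R" if "n \<in> S" for n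
  proof -
    have a: "0 < supnorm n" "real_of_int (supnorm n) < R" using that unfolding S_def A_def by auto
    have "real_of_int \<bar>fst n\<bar> \<le> real_of_int (supnorm n)" "real_of_int \<bar>snd n\<bar> \<le> real_of_int (supnorm n)"
      using supnorm_le[of n] by (simp_all only: of_int_le_iff)
    then show "\<bar>real_of_int (fst n)\<bar> \<le> R" "\<bar>real_of_int (snd n)\<bar> \<le> R" using a by simp_all
    show "1 \<le> real_of_int (supnorm n)" using a by simp
    show "real_of_int (supnorm n) < R" by (fact a(2))
  qed
  have RF4: "4 * R \<le> F" using RF R1 unfolding F_def by simp
  have cardS: "real (card S) \<le> 30 * R^2 / F"
  proof -
    have "card S \<le> card (Tset k R)" by (rule card_mono[OF Tset_finite ST])
    then have "real (card S) \<le> real (card (Tset k R))" by simp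
    also have "\<dots> \<le> 30 * R^2 / F" unfolding F_def using Tset_card[OF k _ RF4[unfolded F_def]] R1 by simp
    finally show ?thesis .
  qed
  have hyp: "(\<Sum>n\<in>S. h n) \<le> 180 * R^2 / F^2"
  proof -
    have "(\<Sum>n\<in>S. h n) \<le> (\<Sum>n\<in>S. 6 / F)"
    proof (rule sum_mono)
      fix n assume nS: "n \<in> S"
      have nL: "inL k n" using nS unfolding S_def by simp
      have n0: "n \<noteq> (0,0)" using nS unfolding S_def A_def supnorm_def by auto
      have "(real_of_int (fst n))^2 \<le> R^2" "(real_of_int (snd n))^2 \<le> R^2"
        using snR[OF nS] by (auto intro: sq_le)
      moreover have "16 * R^2 \<le> F^2" using power_mono[of "4*R" F 2] RF4 R1 by (simp add: power_mult_distrib)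
      ultimately have "2 * (real_of_int (fst n)^2 + real_of_int (snd n)^2) \<le> real (fib k)^2"
        unfolding F_def by (smt (verit) zero_le_power2)
      then have "F \<le> 6 * \<bar>real_of_int (fst n)\<bar> * \<bar>real_of_int (snd n)\<bar>"
        using prod_bound_real[OF k nL n0] unfolding F_def by simp
      also have "\<dots> \<le> 6 * ((1 + real_of_int \<bar>fst n\<bar>) * (1 + real_of_int \<bar>snd n\<bar>))"
        by (simp add: mult_mono)
      finally have le: "F \<le> 6 * ((1 + real_of_int \<bar>fst n\<bar>) * (1 + real_of_int \<bar>snd n\<bar>))" .
      have P: "(1 + real_of_int \<bar>fst n\<bar>) * (1 + real_of_int \<bar>snd n\<bar>) > 0" by (intro mult_pos_pos) auto
      show "h n \<le> 6 / F" unfolding h_def using le P Fpos by (simp add: field_simps)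
    qed
    also have "\<dots> = real (card S) * (6 / F)" by simp
    also have "\<dots> \<le> (30 * R^2 / F) * (6 / F)" using cardS Fpos by (intro mult_right_mono) auto
    also have "\<dots> = 180 * R^2 / F^2" by (simp add: power2_eq_square)
    finally show ?thesis .
  qed
  obtain n0 where "R < 2^n0" using real_arch_pow[of 2 R] by auto
  then have exm: "R \<le> 2^n0" by simp
  define m where "m = (LEAST m. R \<le> 2^m)"
  have Rm: "R \<le> 2^m" unfolding m_def by (rule LeastI[of _ n0]) (rule exm)
  have mR: "2^m < 2 * R"
  proof (cases m)
    case 0 then show ?thesis using R1 by simp
  next
    case (Suc j)
    then have "j < m" by simp
    then have "\<not> R \<le> 2^j" unfolding m_def by (rule not_less_Least)
    then show ?thesis using Suc by simp
  qed
  define c where "c = 2 * sqrt (2::real)"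
  have c3: "c \<le> 3"
  proof -
    have "sqrt (2::real) \<le> sqrt ((3/2)^2)" by (rule real_sqrt_le_mono) (simp add: power2_eq_square)
    then have "sqrt (2::real) \<le> 3/2" by simp
    then show ?thesis unfolding c_def by simp
  qed
  have c0: "c \<ge> 0" unfolding c_def by simp
  have pw: "(\<Sum>n\<in>S. p n) \<le> 450 * sqrt R / F"
  proof -
    have "(\<Sum>n\<in>S. p n) \<le> (\<Sum>n\<in>S. \<Sum>i\<le>m. if real_of_int (supnorm n) \<le> 2^i then c * W i else 0)"
    proof (rule sum_mono)
      fix n assume nS: "n \<in> S"
      show "p n \<le> (\<Sum>i\<le>m. if real_of_int (supnorm n) \<le> 2^i then c * W i else 0)"
        unfolding p_def c_def
        using snR[OF nS] Rm by (intro dyadic_point) linarith+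
    qed
    also have "\<dots> = (\<Sum>i\<le>m. \<Sum>n\<in>S. if real_of_int (supnorm n) \<le> 2^i then c * W i else 0)"
      by (rule sum.swap)
    also have "\<dots> = (\<Sum>i\<le>m. real (card {n\<in>S. real_of_int (supnorm n) \<le> 2^i}) * (c * W i))"
      by (rule sum.cong) (simp_all add: sum.inter_filter[OF finS, symmetric])
    also have "\<dots> \<le> (\<Sum>i\<le>m. (30 * (2^i)^2 / F) * (c * W i))"
    proof (rule sum_mono)
      fix i assume im: "i \<in> {..m}"
      have Wi: "W i \<ge> 0" unfolding W_def by simp
      have pim: "(2::real)^i \<le> 2^m" using im by (intro power_increasing) auto
      have r4: "4 * 2^i \<le> F" using pim mR RF unfolding F_def by linarith
      have "{n\<in>S. real_of_int (supnorm n) \<le> 2^i} \<subseteq> Tset k (2^i)"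
        unfolding S_def A_def Tset_def by auto
      then have "card {n\<in>S. real_of_int (supnorm n) \<le> 2^i} \<le> card (Tset k (2^i))"
        by (rule card_mono[OF Tset_finite])
      then have "real (card {n\<in>S. real_of_int (supnorm n) \<le> 2^i}) \<le> real (card (Tset k (2^i)))" by simp
      also have "\<dots> \<le> 30 * (2^i)^2 / F" unfolding F_def using Tset_card[OF k _ r4[unfolded F_def]] by simp
      finally show "real (card {n\<in>S. real_of_int (supnorm n) \<le> 2^i}) * (c * W i) \<le> (30 * (2^i)^2 / F) * (c * W i)"
        using Wi c0 by (intro mult_right_mono) auto
    qed
    also have "\<dots> = (\<Sum>i\<le>m. (30 * c / F) * sqrt 2 ^ i)"
      by (rule sum.cong) (simp_all add: W_sq[symmetric] field_simps)
    also have "\<dots> = (30 * c / F) * (\<Sum>i\<le>m. sqrt 2 ^ i)" by (simp add: sum_distrib_left)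
    also have "\<dots> \<le> (30 * c / F) * (5 * sqrt R)" using geom_bound[OF mR] c0 Fpos by (intro mult_left_mono) auto
    also have "\<dots> \<le> (30 * 3 / F) * (5 * sqrt R)" using c3 Fpos R1 by (intro mult_right_mono divide_right_mono) auto
    also have "\<dots> = 450 * sqrt R / F" by simp
    finally show ?thesis .
  qed
  show ?thesis using step1 pw hyp unfolding F_def by simp
qed


lemma cube_le:
  assumes "x^3 \<le> y^3" "0 \<le> (y::real)" shows "x \<le> y"
proof (cases "x \<ge> 0")
  case True
  have "x^3 \<le> y^3 \<longleftrightarrow> x \<le> y" by (rule power_mono_iff) (use True assms in auto)
  then show ?thesis using assms by blast
next
  case False then show ?thesis using assms by linarith
qed

lemma large_k:
  assumes k: "k \<ge> 20"
  shows "QR (real (fib (nat \<lceil>2 * real k / 3\<rceil>))) (fib k) (fibpt k) \<le> 1500 * real (fib k) powr (-2/3)"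
proof -
  define k' where "k' = nat \<lceil>2 * real k / 3\<rceil>"
  define R where "R = real (fib k')"
  define F where "F = real (fib k)"
  have c1: "2 * real k / 3 \<le> real_of_int \<lceil>2 * real k / 3\<rceil>" by (rule le_of_int_ceiling)
  have c2: "real_of_int \<lceil>2 * real k / 3\<rceil> < 2 * real k / 3 + 1" using ceiling_correct[of "2 * real k / 3"] by linarith
  have k'1: "2 * k \<le> 3 * k'" "3 * k' \<le> 2 * k + 2" "k' \<ge> 2"
  proof -
    have "real_of_int \<lceil>2 * real k / 3\<rceil> \<ge> 0" using c1 by linarith
    then have e: "real k' = real_of_int \<lceil>2 * real k / 3\<rceil>" unfolding k'_def by simp
    have "2 * real k \<le> 3 * real k'" using c1 e by linarith
    then show "2 * k \<le> 3 * k'" by linarith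
    have "3 * real k' < 2 * real k + 3" using c2 e by linarith
    then show "3 * k' \<le> 2 * k + 2" by linarith
    show "k' \<ge> 2" using \<open>2 * real k \<le> 3 * real k'\<close> k by linarith
  qed
  have ph: "1.6 < phi" "phi < 1.62" using phi_bounds by auto
  have ph1: "1 \<le> phi" using ph by simp
  have Fpos: "F > 0" unfolding F_def using k by (simp add: fib_neq_0_nat)
  have R1: "1 \<le> R" unfolding R_def using k'1 by (simp add: Suc_le_eq fib_neq_0_nat)
  have Rup: "R \<le> phi^(k'-1)" unfolding R_def using fib_phi_upper[of "k'-1"] k'1 by simp
  have Flo: "phi^(k-2) \<le> F"
  proof -
    have e: "k-2+2 = k" using k by simp
    show ?thesis using conjunct1[OF fib_phi_lower[of "k-2"]] unfolding e F_def .
  qed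
  have Fup: "F \<le> phi^(k-1)" unfolding F_def using fib_phi_upper[of "k-1"] k by simp
  have Rlo: "phi^(k'-2) \<le> R"
  proof -
    have e: "k'-2+2 = k'" using k'1 by simp
    show ?thesis using conjunct1[OF fib_phi_lower[of "k'-2"]] unfolding e R_def .
  qed
  have b: "R^3 \<le> phi^3 * F^2"
  proof -
    have "R^3 \<le> (phi^(k'-1))^3" using Rup R1 by (intro power_mono) auto
    also have "\<dots> = phi^(3*(k'-1))" by (simp add: power_mult[symmetric] mult.commute)
    also have "\<dots> \<le> phi^(2*(k-2)+3)" using k'1 k by (intro power_increasing ph1) auto
    also have "\<dots> = phi^3 * (phi^(k-2))^2" by (simp add: power_add power_mult[symmetric] mult.commute)
    also have "\<dots> \<le> phi^3 * F^2" using Flo ph1 by (intro mult_left_mono power_mono) auto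
    finally show ?thesis .
  qed
  have c: "F^2 \<le> phi^4 * R^3"
  proof -
    have "F^2 \<le> (phi^(k-1))^2" using Fup Fpos by (intro power_mono) auto
    also have "\<dots> = phi^(2*(k-1))" by (simp add: power_mult[symmetric] mult.commute)
    also have "\<dots> \<le> phi^(3*(k'-2)+4)" using k'1 k by (intro power_increasing ph1) auto
    also have "\<dots> = phi^4 * (phi^(k'-2))^3" by (simp add: power_add power_mult[symmetric] mult.commute)
    also have "\<dots> \<le> phi^4 * R^3" using Rlo ph1 by (intro mult_left_mono power_mono) auto
    finally show ?thesis .
  qed
  have F18: "2584 \<le> F"
  proof -
    have "(1.6::real)^18 \<le> phi^18" using ph by (intro power_mono) auto
    also have "\<dots> \<le> phi^(k-2)" using k ph1 by (intro power_increasing) auto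
    also have "\<dots> \<le> F" by (fact Flo)
    finally have "(1.6::real)^18 \<le> F" .
    moreover have "(2584::real) \<le> 1.6^18" by (simp add: power_divide)
    ultimately show ?thesis by linarith
  qed
  have phi3: "phi^3 \<le> 4.3"
  proof -
    have "phi^3 \<le> 1.62^3" using ph by (intro power_mono) auto
    moreover have "(1.62::real)^3 \<le> 4.3" by (simp add: power3_eq_cube)
    ultimately show ?thesis by linarith
  qed
  have RF: "8 * R \<le> F"
  proof -
    have "phi^3 * F^2 \<le> 4.3 * F^2" by (rule mult_right_mono[OF phi3]) simp
    then have r1: "R^3 \<le> 4.3 * F^2" using b by linarith
    have "2201.6 * F^2 \<le> F * F^2" using F18 by (intro mult_right_mono) auto
    then have "R^3 * 512 \<le> F^3" using r1 by (simp add: power2_eq_square power3_eq_cube)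
    then have "(8*R)^3 \<le> F^3" by (simp add: power_mult_distrib)
    then show ?thesis by (rule cube_le) (use Fpos in linarith)
  qed
  have main: "QR R (fib k) (fibpt k) \<le> 1/R + 450 * sqrt R / F + 180 * R^2 / F^2"
    unfolding F_def by (rule QR_bound) (use k R1 RF[unfolded F_def] in auto)
  define t where "t = F powr (1/3)"
  have tpos: "t > 0" unfolding t_def using Fpos by simp
  have t3: "t^3 = F"
  proof -
    have "t^3 = t powr (real 3)" by (rule powr_realpow[symmetric]) (rule tpos)
    also have "\<dots> = F powr (1/3 * real 3)" unfolding t_def by (rule powr_powr)
    also have "\<dots> = F" using Fpos by simp
    finally show ?thesis .
  qed
  have Fpw: "F powr (-2/3) = 1 / t^2"
  proof -
    have "t^2 = t powr (real 2)" by (rule powr_realpow[symmetric]) (rule tpos)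
    also have "\<dots> = F powr (1/3 * real 2)" unfolding t_def by (rule powr_powr)
    also have "\<dots> = F powr (2/3)" by simp
    finally have "t^2 = F powr (2/3)" .
    then show ?thesis using Fpos by (simp add: powr_minus_divide)
  qed
  have t2R: "t^2 \<le> phi^2 * R"
  proof -
    have "(t^2)^3 = (t^3)^2" by (simp add: power_mult[symmetric])
    also have "\<dots> = F^2" using t3 by simp
    also have "\<dots> \<le> phi^4 * R^3" by (fact c)
    also have "\<dots> \<le> phi^6 * R^3" using ph1 R1 by (intro mult_right_mono power_increasing) auto
    also have "\<dots> = (phi^2 * R)^3" by (simp add: power_mult_distrib power_mult[symmetric])
    finally show ?thesis by (rule cube_le) (use ph1 R1 in simp)
  qed
  have Rt2: "R \<le> phi * t^2"
  proof -
    have "R^3 \<le> phi^3 * F^2" by (fact b)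
    also have "\<dots> = phi^3 * (t^3)^2" using t3 by simp
    also have "\<dots> = phi^3 * (t^2)^3" by (simp add: power_mult[symmetric])
    also have "\<dots> = (phi * t^2)^3" by (simp add: power_mult_distrib)
    finally show ?thesis by (rule cube_le) (use ph1 tpos in simp)
  qed
  have T1: "1/R \<le> phi^2 / t^2" using t2R R1 tpos by (simp add: field_simps)
  have T2: "sqrt R / F \<le> 2 / t^2"
  proof -
    have "sqrt R \<le> sqrt (phi * t^2)" using Rt2 by simp
    also have "\<dots> = sqrt phi * t" using tpos ph1 by (simp add: real_sqrt_mult)
    also have "\<dots> \<le> 2 * t"
    proof -
      have "sqrt phi \<le> sqrt (2^2)" by (rule real_sqrt_le_mono) (use ph in simp)
      then have "sqrt phi \<le> 2" by simp
      then show ?thesis using tpos by (intro mult_right_mono) auto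
    qed
    finally have "sqrt R \<le> 2 * t" .
    then have "sqrt R / F \<le> 2 * t / t^3" using t3 Fpos by (simp add: divide_right_mono)
    also have "\<dots> = 2 / t^2" using tpos by (simp add: power2_eq_square power3_eq_cube)
    finally show ?thesis .
  qed
  have T3: "R^2 / F^2 \<le> phi^2 / t^2"
  proof -
    have "R^2 \<le> (phi * t^2)^2" using Rt2 R1 by (intro power_mono) auto
    then have "R^2 / F^2 \<le> (phi * t^2)^2 / (t^3)^2" using t3 Fpos by (simp add: divide_right_mono)
    also have "\<dots> = phi^2 / t^2" using tpos by (simp add: field_simps power2_eq_square power3_eq_cube)
    finally show ?thesis .
  qed
  have phi2: "phi^2 \<le> 3" using ph by (simp add: phi_sq)
  have "450 * sqrt R / F \<le> 450 * (2 / t^2)" using T2 by simp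
  moreover have "180 * R^2 / F^2 \<le> 180 * (phi^2 / t^2)" using T3 by simp
  ultimately have "QR R (fib k) (fibpt k) \<le> phi^2 / t^2 + 450 * (2 / t^2) + 180 * (phi^2 / t^2)"
    using main T1 by linarith
  also have "\<dots> = (181 * phi^2 + 900) / t^2" by (simp add: add_divide_distrib algebra_simps)
  also have "\<dots> \<le> 1500 / t^2" using phi2 tpos by (intro divide_right_mono) auto
  finally have "QR R (fib k) (fibpt k) \<le> 1500 * (1 / t^2)" by simp
  then show ?thesis unfolding Fpw[symmetric] R_def k'_def F_def .
qed

theorem lemma1:
  shows "\<exists>c > (0::real). \<forall>k::nat. k \<ge> 3 \<longrightarrow>
    QR (real (fib (nat \<lceil>2 * real k / 3\<rceil>))) (fib k) (fibpt k)
      \<le> c * real (fib k) powr (-2/3)"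
proof -
  define Q where "Q k = QR (real (fib (nat \<lceil>2 * real k / 3\<rceil>))) (fib k) (fibpt k)" for k :: nat
  define c where "c = 1500 + (\<Sum>k<20. \<bar>Q k\<bar> * real (fib k) powr (2/3))"
  have s0: "(\<Sum>k<20. \<bar>Q k\<bar> * real (fib k) powr (2/3)) \<ge> 0" by (intro sum_nonneg) simp
  then have cpos: "c > 0" unfolding c_def by simp
  have main: "Q k \<le> c * real (fib k) powr (-2/3)" if k3: "k \<ge> 3" for k
  proof -
    have Fpos: "real (fib k) > 0" using k3 by (simp add: fib_neq_0_nat)
    have pw0: "real (fib k) powr (-2/3) \<ge> 0" by simp
    show ?thesis
    proof (cases "k \<ge> 20")
      case True
      have "Q k \<le> 1500 * real (fib k) powr (-2/3)" unfolding Q_def by (rule large_k[OF True])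
      also have "\<dots> \<le> c * real (fib k) powr (-2/3)" using s0 pw0 unfolding c_def
        by (intro mult_right_mono) auto
      finally show ?thesis .
    next
      case False
      have e: "real (fib k) powr (2/3) * real (fib k) powr (-2/3) = 1"
        using Fpos by (simp add: powr_add[symmetric])
      have "Q k \<le> \<bar>Q k\<bar>" by simp
      also have "\<dots> = (\<bar>Q k\<bar> * real (fib k) powr (2/3)) * real (fib k) powr (-2/3)"
        using e by (simp add: mult.assoc)
      also have "\<dots> \<le> (\<Sum>k<20. \<bar>Q k\<bar> * real (fib k) powr (2/3)) * real (fib k) powr (-2/3)"
        using False pw0 by (intro mult_right_mono member_le_sum) auto
      also have "\<dots> \<le> c * real (fib k) powr (-2/3)" using pw0 unfolding c_def
        by (intro mult_right_mono) auto
      finally show ?thesis .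
    qed
  qed
  show ?thesis using cpos main unfolding Q_def by blast
qed

end
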